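(* Let $G$ and $G_0$ be connected graphs such that $G$ is a cactus and $G_0$ is a subgraph of $G$ that is either a cactus or a cycle. Then there exist sequences $(P_1,\dots,P_r)$ and $(G_0,G_1,\dots,G_r)$ of subgraphs of $G$ ($r\ge 0$, with $r=0$ iff $G=G_0$) such that $G_r=G$, every $G_i$ with $i\ge1$ is a cactus, and for every $i\in\{1,\dots,r\}$: $G_i=G_{i-1}\cup P_i$ with $E(P_i)\cap E(G_{i-1})=\emptyset$, where $P_i$ is a path, a cycle, or a lollipop, and (p) if $P_i$ is a path then $V(G_{i-1})\cap V(P_i)=End(P_i)$; (l) if $P_i$ is a lollipop then $V(G_{i-1})\cap V(P_i)=End(P_i)$; (c) if $P_i$ is a cycle then $|V(G_{i-1})\cap V(P_i)|=1$. Consequently $G_{i-1}$ is a proper subgraph of $G_i$ and $\Delta G_i-\Delta G_{i-1}=1$ for all $i$.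
   Context: Graphs are finite, may have loops and parallel edges, and have no isolated vertices unless stated otherwise. A leaf is a vertex incident to exactly one edge, which is not a loop. $\Delta G=|E(G)|-|V(G)|$. A cycle is a connected graph all of whose vertices have degree 2 (a loop contributes 2; a single vertex with a loop is a cycle). An $(x,y)$-path is a path with distinct end vertices $x,y$ and at least one edge, and $End(P)=\{x,y\}$. A lollipop is a graph obtained from a cycle $C$ (possibly a loop) and a vertex-disjoint path $P$ with end vertices $y,x$ by identifying a vertex of $C$ with $y$; its end-vertex is $x$, and $End(Q)=\{x\}$. A cacti-graph is a graph with no isolated vertices, no leaves, and no component that is a cycle (equivalently, no isolated vertices, no leaves, and every component contains at least two cycles). A cactus is a connected cacti-graph (this is not the standard meaning of "cactus"). *)

theory Defs
  imports Main
begin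

text \<open>Multigraphs with loops and parallel edges. Edges carry identities of type 'e and
  a global incidence map inc :: 'e => 'v set assigns to each edge its set of end vertices
  (one vertex for a loop, two for a non-loop edge). Subgraphs share edge identities with the host graph.\<close>

type_synonym ('v,'e) graph = "'v set \<times> 'e set"

definition verts :: "('v,'e) graph \<Rightarrow> 'v set" where "verts G = fst G"
definition edges :: "('v,'e) graph \<Rightarrow> 'e set" where "edges G = snd G"

definition is_graph :: "('e \<Rightarrow> 'v set) \<Rightarrow> ('v,'e) graph \<Rightarrow> bool" where
  "is_graph inc G \<longleftrightarrow> finite (verts G) \<and> finite (edges G) \<and>
     (\<forall>e\<in>edges G. inc e \<subseteq> verts G \<and> (card (inc e) = 1 \<or> card (inc e) = 2))"

definition is_loop :: "('e \<Rightarrow> 'v set) \<Rightarrow> 'e \<Rightarrow> bool" where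
  "is_loop inc e \<longleftrightarrow> card (inc e) = 1"

definition subgraph :: "('e \<Rightarrow> 'v set) \<Rightarrow> ('v,'e) graph \<Rightarrow> ('v,'e) graph \<Rightarrow> bool" where
  "subgraph inc H G \<longleftrightarrow> is_graph inc H \<and> is_graph inc G \<and>
     verts H \<subseteq> verts G \<and> edges H \<subseteq> edges G"

definition proper_subgraph :: "('e \<Rightarrow> 'v set) \<Rightarrow> ('v,'e) graph \<Rightarrow> ('v,'e) graph \<Rightarrow> bool" where
  "proper_subgraph inc H G \<longleftrightarrow> subgraph inc H G \<and> H \<noteq> G"

definition graph_union :: "('v,'e) graph \<Rightarrow> ('v,'e) graph \<Rightarrow> ('v,'e) graph" where
  "graph_union G H = (verts G \<union> verts H, edges G \<union> edges H)"

definition degree :: "('e \<Rightarrow> 'v set) \<Rightarrow> ('v,'e) graph \<Rightarrow> 'v \<Rightarrow> nat" where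
  "degree inc G v = card {e\<in>edges G. v \<in> inc e \<and> \<not> is_loop inc e}
                    + 2 * card {e\<in>edges G. inc e = {v}}"

definition isolated :: "('e \<Rightarrow> 'v set) \<Rightarrow> ('v,'e) graph \<Rightarrow> 'v \<Rightarrow> bool" where
  "isolated inc G v \<longleftrightarrow> v \<in> verts G \<and> (\<forall>e\<in>edges G. v \<notin> inc e)"

definition is_leaf :: "('e \<Rightarrow> 'v set) \<Rightarrow> ('v,'e) graph \<Rightarrow> 'v \<Rightarrow> bool" where
  "is_leaf inc G v \<longleftrightarrow> v \<in> verts G \<and>
     (\<exists>e. {f\<in>edges G. v \<in> inc f} = {e} \<and> \<not> is_loop inc e)"

definition adj :: "('e \<Rightarrow> 'v set) \<Rightarrow> ('v,'e) graph \<Rightarrow> ('v \<times> 'v) set" where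
  "adj inc G = {(u,v). \<exists>e\<in>edges G. inc e = {u,v}}"

definition reach :: "('e \<Rightarrow> 'v set) \<Rightarrow> ('v,'e) graph \<Rightarrow> 'v \<Rightarrow> 'v \<Rightarrow> bool" where
  "reach inc G u v \<longleftrightarrow> (u, v) \<in> (adj inc G)\<^sup>*"

definition connected :: "('e \<Rightarrow> 'v set) \<Rightarrow> ('v,'e) graph \<Rightarrow> bool" where
  "connected inc G \<longleftrightarrow> verts G \<noteq> {} \<and> (\<forall>u\<in>verts G. \<forall>v\<in>verts G. reach inc G u v)"

definition component :: "('e \<Rightarrow> 'v set) \<Rightarrow> ('v,'e) graph \<Rightarrow> ('v,'e) graph \<Rightarrow> bool" where
  "component inc G H \<longleftrightarrow> (\<exists>v\<in>verts G. verts H = {u\<in>verts G. reach inc G v u} \<and>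
      edges H = {e\<in>edges G. inc e \<subseteq> verts H})"

definition is_cycle :: "('e \<Rightarrow> 'v set) \<Rightarrow> ('v,'e) graph \<Rightarrow> bool" where
  "is_cycle inc G \<longleftrightarrow> is_graph inc G \<and> connected inc G \<and> (\<forall>v\<in>verts G. degree inc G v = 2)"

definition is_path :: "('e \<Rightarrow> 'v set) \<Rightarrow> ('v,'e) graph \<Rightarrow> 'v \<Rightarrow> 'v \<Rightarrow> bool" where
  "is_path inc G x y \<longleftrightarrow> is_graph inc G \<and>
     (\<exists>vs es. distinct vs \<and> distinct es \<and> length es \<ge> 1 \<and> length vs = length es + 1 \<and>
        hd vs = x \<and> last vs = y \<and>
        (\<forall>i<length es. inc (es ! i) = {vs ! i, vs ! Suc i}) \<and>
        verts G = set vs \<and> edges G = set es)"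

definition is_path_graph :: "('e \<Rightarrow> 'v set) \<Rightarrow> ('v,'e) graph \<Rightarrow> bool" where
  "is_path_graph inc G \<longleftrightarrow> (\<exists>x y. is_path inc G x y)"

definition is_lollipop :: "('e \<Rightarrow> 'v set) \<Rightarrow> ('v,'e) graph \<Rightarrow> 'v \<Rightarrow> bool" where
  "is_lollipop inc G x \<longleftrightarrow> (\<exists>C P y. is_cycle inc C \<and> is_path inc P y x \<and>
     verts C \<inter> verts P = {y} \<and> edges C \<inter> edges P = {} \<and> G = graph_union C P)"

definition is_lollipop_graph :: "('e \<Rightarrow> 'v set) \<Rightarrow> ('v,'e) graph \<Rightarrow> bool" where
  "is_lollipop_graph inc G \<longleftrightarrow> (\<exists>x. is_lollipop inc G x)"

definition cacti_graph :: "('e \<Rightarrow> 'v set) \<Rightarrow> ('v,'e) graph \<Rightarrow> bool" where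
  "cacti_graph inc G \<longleftrightarrow> is_graph inc G \<and>
     (\<forall>v\<in>verts G. \<not> isolated inc G v) \<and> (\<forall>v\<in>verts G. \<not> is_leaf inc G v) \<and>
     (\<forall>H. component inc G H \<longrightarrow> \<not> is_cycle inc H)"

definition cactus :: "('e \<Rightarrow> 'v set) \<Rightarrow> ('v,'e) graph \<Rightarrow> bool" where
  "cactus inc G \<longleftrightarrow> connected inc G \<and> cacti_graph inc G"

definition excess :: "('v,'e) graph \<Rightarrow> int" where
  "excess G = int (card (edges G)) - int (card (verts G))"

end

theory Submission
  imports Defs
begin


lemma verts_pair[simp]: "verts (a,b) = a" by (simp add: verts_def)
lemma edges_pair[simp]: "edges (a,b) = b" by (simp add: edges_def)
lemma graph_eqI: "verts G = verts H \<Longrightarrow> edges G = edges H \<Longrightarrow> G = H"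
  by (simp add: verts_def edges_def prod_eq_iff)
lemma verts_union[simp]: "verts (graph_union G H) = verts G \<union> verts H"
  by (simp add: graph_union_def)
lemma edges_union[simp]: "edges (graph_union G H) = edges G \<union> edges H"
  by (simp add: graph_union_def)

definition goodv :: "('e \<Rightarrow> 'v set) \<Rightarrow> ('v,'e) graph \<Rightarrow> 'v \<Rightarrow> bool" where
 "goodv inc H v \<longleftrightarrow> (\<exists>e\<in>edges H. v \<in> inc e) \<and>
     \<not>(\<exists>e. {f\<in>edges H. v \<in> inc f} = {e} \<and> \<not> is_loop inc e)"

lemma good_iff: "v \<in> verts H \<Longrightarrow> goodv inc H v \<longleftrightarrow> \<not> isolated inc H v \<and> \<not> is_leaf inc H v"
  unfolding goodv_def isolated_def is_leaf_def by blast

lemma good_two: "e1 \<in> edges H \<Longrightarrow> e2 \<in> edges H \<Longrightarrow> e1 \<noteq> e2 \<Longrightarrow> v \<in> inc e1 \<Longrightarrow> v \<in> inc e2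
  \<Longrightarrow> goodv inc H v"
  unfolding goodv_def by (metis (mono_tags, lifting) mem_Collect_eq singletonD)

lemma good_loop: assumes "e \<in> edges H" "inc e = {v}" shows "goodv inc H v"
proof -
  have "\<not>(\<exists>e'. {f\<in>edges H. v \<in> inc f} = {e'} \<and> \<not> is_loop inc e')"
  proof
    assume "\<exists>e'. {f\<in>edges H. v \<in> inc f} = {e'} \<and> \<not> is_loop inc e'"
    then obtain e' where "{f\<in>edges H. v \<in> inc f} = {e'}" "\<not> is_loop inc e'" by blast
    moreover have "e \<in> {f\<in>edges H. v \<in> inc f}" using assms by auto
    ultimately show False using assms unfolding is_loop_def by auto
  qed
  then show ?thesis unfolding goodv_def using assms by auto
qed

lemma good_mono: "goodv inc H v \<Longrightarrow> edges H \<subseteq> edges H' \<Longrightarrow> goodv inc H' v"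
  unfolding goodv_def
proof (elim conjE, intro conjI)
  assume a: "\<exists>e\<in>edges H. v \<in> inc e" "edges H \<subseteq> edges H'"
   and b: "\<not> (\<exists>e. {f \<in> edges H. v \<in> inc f} = {e} \<and> \<not> is_loop inc e)"
  show "\<exists>e\<in>edges H'. v \<in> inc e" using a by blast
  show "\<not> (\<exists>e. {f \<in> edges H'. v \<in> inc f} = {e} \<and> \<not> is_loop inc e)"
  proof
    assume "\<exists>e. {f \<in> edges H'. v \<in> inc f} = {e} \<and> \<not> is_loop inc e"
    then obtain e where e: "{f \<in> edges H'. v \<in> inc f} = {e}" "\<not> is_loop inc e" by blast
    obtain e0 where e0: "e0\<in>edges H" "v \<in> inc e0" using a by blast
    have "{f \<in> edges H. v \<in> inc f} \<subseteq> {e}" using a(2) e(1) by blast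
    with e0 have "{f \<in> edges H. v \<in> inc f} = {e}" by blast
    then show False using b e by blast
  qed
qed

lemma deg_ge2_good: assumes "degree inc H v \<ge> 2" shows "goodv inc H v"
proof (rule ccontr)
  assume ng: "\<not> goodv inc H v"
  show False
  proof (cases "\<exists>e\<in>edges H. v \<in> inc e")
    case False
    then have "{e\<in>edges H. v \<in> inc e \<and> \<not> is_loop inc e} = {}" "{e\<in>edges H. inc e = {v}} = {}" by auto
    then have "degree inc H v = 0" unfolding degree_def by (simp only: card.empty)
    then show False using assms by simp
  next
    case True
    then obtain e where e: "{f\<in>edges H. v \<in> inc f} = {e}" "\<not> is_loop inc e" using ng unfolding goodv_def by blast
    then have "{f\<in>edges H. v \<in> inc f \<and> \<not> is_loop inc f} = {e}" by blast
    moreover have "{f\<in>edges H. inc f = {v}} = {}"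
    proof -
      { fix f assume "f \<in> edges H" "inc f = {v}"
        then have "f = e" using e by blast
        then have False using e \<open>inc f = {v}\<close> unfolding is_loop_def by simp }
      then show ?thesis by blast
    qed
    ultimately have "degree inc H v = 1" unfolding degree_def by (simp only: card.empty, simp)
    then show False using assms by simp
  qed
qed

lemma good_deg_ge2: assumes "goodv inc H v" "finite (edges H)" shows "degree inc H v \<ge> 2"
proof (cases "\<exists>e\<in>edges H. inc e = {v}")
  case True
  then have "card {e\<in>edges H. inc e = {v}} \<ge> 1" using assms(2)
    by (metis (mono_tags, lifting) One_nat_def Suc_leI card_gt_0_iff empty_iff finite_subset mem_Collect_eq subsetI)
  then show ?thesis unfolding degree_def by simp
next
  case False
  let ?A = "{e\<in>edges H. v \<in> inc e \<and> \<not> is_loop inc e}"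
  have eq: "?A = {e\<in>edges H. v \<in> inc e}"
  proof -
    { fix e assume e: "e \<in> edges H" "v \<in> inc e" "is_loop inc e"
      then obtain w where "inc e = {w}" unfolding is_loop_def by (meson card_1_singletonE)
      with e False have False by auto }
    then show ?thesis by blast
  qed
  have fin: "finite ?A" using assms(2) by simp
  have ne: "?A \<noteq> {}" using assms(1) unfolding goodv_def eq by blast
  have "\<not> (\<exists>e. ?A = {e})" using assms(1) unfolding goodv_def eq
    by (smt (verit, ccfv_threshold) eq mem_Collect_eq singletonI)
  then have "card ?A \<noteq> 1" by (meson card_1_singletonE)
  moreover have "card ?A \<noteq> 0" using fin ne by simp
  ultimately show ?thesis unfolding degree_def by linarith
qed



lemma double_count: assumes "finite A" "finite B"
  shows "(\<Sum>a\<in>A. card {b\<in>B. R a b}) = (\<Sum>b\<in>B. card {a\<in>A. R a b})"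
proof -
  have 1: "\<And>a. card {b\<in>B. R a b} = (\<Sum>b\<in>B. if R a b then 1 else 0)"
    using assms(2) by (simp add: sum.If_cases Int_def)
  have 2: "\<And>b. card {a\<in>A. R a b} = (\<Sum>a\<in>A. if R a b then 1 else 0)"
    using assms(1) by (simp add: sum.If_cases Int_def)
  show ?thesis unfolding 1 2 by (rule sum.swap)
qed

lemma handshake: assumes g: "is_graph inc H"
  shows "(\<Sum>v\<in>verts H. degree inc H v) = 2 * card (edges H)"
proof -
  let ?V = "verts H" and ?E = "edges H"
  have fV: "finite ?V" and fE: "finite ?E" using g unfolding is_graph_def by auto
  let ?NL = "{e\<in>?E. \<not> is_loop inc e}" and ?L = "{e\<in>?E. is_loop inc e}"
  have s1: "(\<Sum>v\<in>?V. card {e\<in>?E. v \<in> inc e \<and> \<not> is_loop inc e}) = 2 * card ?NL"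
  proof -
    have "(\<Sum>v\<in>?V. card {e\<in>?E. v \<in> inc e \<and> \<not> is_loop inc e})
        = (\<Sum>e\<in>?E. card {v\<in>?V. v \<in> inc e \<and> \<not> is_loop inc e})"
      by (rule double_count[OF fV fE])
    also have "\<dots> = (\<Sum>e\<in>?E. if \<not> is_loop inc e then 2 else 0)"
    proof (rule sum.cong[OF refl])
      fix e assume e: "e \<in> ?E"
      then have "inc e \<subseteq> ?V" "card (inc e) = 1 \<or> card (inc e) = 2" using g unfolding is_graph_def by auto
      show "card {v\<in>?V. v \<in> inc e \<and> \<not> is_loop inc e} = (if \<not> is_loop inc e then 2 else 0)"
      proof (cases "is_loop inc e")
        case True
        then show ?thesis by simp
      next
        case False
        then have "{v\<in>?V. v \<in> inc e \<and> \<not> is_loop inc e} = inc e" using \<open>inc e \<subseteq> ?V\<close> by auto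
        then show ?thesis using False \<open>card (inc e) = 1 \<or> card (inc e) = 2\<close> unfolding is_loop_def by simp
      qed
    qed
    also have "\<dots> = 2 * card ?NL" using fE by (simp add: sum.If_cases Int_def)
    finally show ?thesis .
  qed
  have s2: "(\<Sum>v\<in>?V. card {e\<in>?E. inc e = {v}}) = card ?L"
  proof -
    have "(\<Sum>v\<in>?V. card {e\<in>?E. inc e = {v}}) = (\<Sum>e\<in>?E. card {v\<in>?V. inc e = {v}})"
      by (rule double_count[OF fV fE])
    also have "\<dots> = (\<Sum>e\<in>?E. if is_loop inc e then 1 else 0)"
    proof (rule sum.cong[OF refl])
      fix e assume e: "e \<in> ?E"
      then have sub: "inc e \<subseteq> ?V" using g unfolding is_graph_def by auto
      show "card {v\<in>?V. inc e = {v}} = (if is_loop inc e then 1 else 0)"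
      proof (cases "is_loop inc e")
        case True
        then obtain w where w: "inc e = {w}" unfolding is_loop_def by (meson card_1_singletonE)
        then have "{v\<in>?V. inc e = {v}} = {w}" using sub by auto
        then show ?thesis using True by simp
      next
        case False
        have "{v\<in>?V. inc e = {v}} = {}" using False unfolding is_loop_def by auto
        then have "card {v\<in>?V. inc e = {v}} = 0" by (simp only: card.empty)
        then show ?thesis using False by simp
      qed
    qed
    also have "\<dots> = card ?L" using fE by (simp add: sum.If_cases Int_def)
    finally show ?thesis .
  qed
  have "?E = ?NL \<union> ?L" by auto
  then have "card ?E = card ?NL + card ?L"
    using fE by (metis (no_types, lifting) card_Un_disjoint disjoint_iff finite_Un mem_Collect_eq)
  then show ?thesis unfolding degree_def using s1 s2 by (simp add: sum.distrib sum_distrib_left[symmetric])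
qed

lemma cycle_card: assumes "is_cycle inc H" shows "card (edges H) = card (verts H)"
proof -
  have g: "is_graph inc H" using assms unfolding is_cycle_def by auto
  have "(\<Sum>v\<in>verts H. degree inc H v) = (\<Sum>v\<in>verts H. 2)"
    using assms unfolding is_cycle_def by (intro sum.cong) auto
  then show ?thesis using handshake[OF g] by simp
qed

lemma good_card: assumes "is_graph inc H" "\<forall>v\<in>verts H. goodv inc H v"
  shows "card (verts H) \<le> card (edges H)"
proof -
  have fE: "finite (edges H)" using assms unfolding is_graph_def by auto
  have "(\<Sum>v\<in>verts H. 2) \<le> (\<Sum>v\<in>verts H. degree inc H v)"
    using assms(2) good_deg_ge2[OF _ fE] by (intro sum_mono) auto
  then show ?thesis using handshake[OF assms(1)] by simp
qed



definition chain :: "('e \<Rightarrow> 'v set) \<Rightarrow> 'v list \<Rightarrow> 'e list \<Rightarrow> bool" where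
  "chain inc vs es \<longleftrightarrow> length vs = Suc (length es) \<and> (\<forall>i<length es. inc (es ! i) = {vs ! i, vs ! Suc i})"

lemma is_path_chain: "is_path inc P x y \<longleftrightarrow> is_graph inc P \<and> (\<exists>vs es. distinct vs \<and> distinct es \<and> es \<noteq> [] \<and>
   chain inc vs es \<and> hd vs = x \<and> last vs = y \<and> verts P = set vs \<and> edges P = set es)"
  unfolding is_path_def chain_def
  by (metis One_nat_def Suc_eq_plus1 Suc_le_eq length_greater_0_conv)

lemma chain_graph: assumes "chain inc vs es"
  shows "is_graph inc (set vs, set es)"
  unfolding is_graph_def
proof (intro conjI ballI)
  fix e assume "e \<in> edges (set vs, set es)"
  then obtain i where i: "i < length es" "e = es ! i" by (auto simp: in_set_conv_nth)
  then have ie: "inc e = {vs ! i, vs ! Suc i}" using assms unfolding chain_def by auto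
  have "Suc i < length vs" using i assms unfolding chain_def by auto
  then show "inc e \<subseteq> verts (set vs, set es)" using ie by auto
  show "card (inc e) = 1 \<or> card (inc e) = 2" using ie by (cases "vs ! i = vs ! Suc i") auto
qed auto

lemma chain_path: assumes "chain inc vs es" "distinct vs" "distinct es" "es \<noteq> []"
  shows "is_path inc (set vs, set es) (hd vs) (last vs)"
  unfolding is_path_chain using assms chain_graph[OF assms(1)] by auto

lemma path_facts: assumes "is_path inc P x y"
  shows "card (edges P) + 1 = card (verts P)" "x \<noteq> y" "x \<in> verts P" "y \<in> verts P"
    "is_leaf inc P x" "is_leaf inc P y"
proof -
  obtain vs es where d: "distinct vs" "distinct es" "es \<noteq> []" and c: "chain inc vs es"
    and hx: "hd vs = x" and ly: "last vs = y" and V: "verts P = set vs" and E: "edges P = set es"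
    using assms unfolding is_path_chain by blast
  let ?n = "length es"
  have len: "length vs = Suc ?n" and ce: "\<And>i. i < ?n \<Longrightarrow> inc (es ! i) = {vs ! i, vs ! Suc i}"
    using c unfolding chain_def by auto
  have n0: "?n > 0" using d by auto
  have x0: "x = vs ! 0" using hx len by (metis hd_conv_nth list.size(3) nat.distinct(1))
  have yn: "y = vs ! ?n" using ly len by (metis diff_Suc_1 last_conv_nth list.size(3) nat.distinct(1))
  have dd: "\<And>i j. i < length vs \<Longrightarrow> j < length vs \<Longrightarrow> vs ! i = vs ! j \<longleftrightarrow> i = j"
    using d(1) nth_eq_iff_index_eq by blast
  show "card (edges P) + 1 = card (verts P)" using V E d len by (simp add: distinct_card)
  show "x \<noteq> y" using x0 yn dd[of 0 ?n] len n0 by auto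
  show "x \<in> verts P" "y \<in> verts P" using x0 yn V len by auto
  show "is_leaf inc P x"
    unfolding is_leaf_def
  proof (intro conjI exI)
    show "x \<in> verts P" using x0 V len by auto
    show "{f \<in> edges P. x \<in> inc f} = {es ! 0}"
    proof (intro equalityI subsetI)
      fix f assume "f \<in> {f \<in> edges P. x \<in> inc f}"
      then obtain i where i: "i < ?n" "f = es ! i" "x \<in> inc f" using E by (auto simp: in_set_conv_nth)
      then have "vs ! 0 = vs ! i \<or> vs ! 0 = vs ! Suc i" using ce x0 by auto
      then have "i = 0" using dd[of 0 i] dd[of 0 "Suc i"] i len by auto
      then show "f \<in> {es ! 0}" using i by simp
    next
      fix f assume "f \<in> {es ! 0}"
      then show "f \<in> {f \<in> edges P. x \<in> inc f}" using E n0 ce[of 0] x0 by auto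
    qed
    show "\<not> is_loop inc (es ! 0)" unfolding is_loop_def using ce[OF n0] dd[of 0 1] len n0 by auto
  qed
  show "is_leaf inc P y"
    unfolding is_leaf_def
  proof (intro conjI exI)
    show "y \<in> verts P" using yn V len by auto
    show "{f \<in> edges P. y \<in> inc f} = {es ! (?n - 1)}"
    proof (intro equalityI subsetI)
      fix f assume "f \<in> {f \<in> edges P. y \<in> inc f}"
      then obtain i where i: "i < ?n" "f = es ! i" "y \<in> inc f" using E by (auto simp: in_set_conv_nth)
      then have "vs ! ?n = vs ! i \<or> vs ! ?n = vs ! Suc i" using ce yn by auto
      then have "i = ?n - 1" using dd[of ?n i] dd[of ?n "Suc i"] i len by auto
      then show "f \<in> {es ! (?n - 1)}" using i by simp
    next
      fix f assume "f \<in> {es ! (?n - 1)}"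
      then show "f \<in> {f \<in> edges P. y \<in> inc f}" using E n0 ce[of "?n - 1"] yn by auto
    qed
    have "?n - 1 \<noteq> ?n" "?n - 1 < length vs" "?n < length vs" using n0 len by linarith+
    then have "vs ! (?n - 1) \<noteq> vs ! ?n" using dd[of "?n - 1" ?n] by blast
    then show "\<not> is_loop inc (es ! (?n - 1))" unfolding is_loop_def using ce[of "?n - 1"] n0 by auto
  qed
qed

lemma path_graph: "is_path inc P x y \<Longrightarrow> is_graph inc P" unfolding is_path_def by auto

lemma lollipop_facts: assumes "is_lollipop inc P x"
  shows "card (edges P) = card (verts P)" "is_leaf inc P x"
proof -
  obtain C Q y where C: "is_cycle inc C" and Q: "is_path inc Q y x" and VI: "verts C \<inter> verts Q = {y}"
    and EI: "edges C \<inter> edges Q = {}" and PU: "P = graph_union C Q"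
    using assms unfolding is_lollipop_def by blast
  have gC: "is_graph inc C" using C unfolding is_cycle_def by auto
  have gQ: "is_graph inc Q" using Q unfolding is_path_def by auto
  have fin: "finite (verts C)" "finite (edges C)" "finite (verts Q)" "finite (edges Q)"
    using gC gQ unfolding is_graph_def by auto
  have cc: "card (edges C) = card (verts C)" by (rule cycle_card[OF C])
  have cq: "card (edges Q) + 1 = card (verts Q)" by (rule path_facts(1)[OF Q])
  have "card (verts P) + 1 = card (verts C) + card (verts Q)"
    using card_Un_Int[OF fin(1) fin(3)] VI PU by simp
  moreover have "card (edges P) = card (edges C) + card (edges Q)"
    using card_Un_disjoint[OF fin(2) fin(4) EI] PU by simp
  ultimately show "card (edges P) = card (verts P)" using cc cq by simp
  have xy: "x \<noteq> y" using path_facts(2)[OF Q] by simp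
  have xQ: "x \<in> verts Q" using path_facts(4)[OF Q] .
  have xC: "x \<notin> verts C" using VI xy xQ by auto
  have noC: "\<And>e. e \<in> edges C \<Longrightarrow> x \<notin> inc e" using gC xC unfolding is_graph_def by auto
  have lq: "is_leaf inc Q x" using path_facts(6)[OF Q] .
  then obtain e where e: "{f \<in> edges Q. x \<in> inc f} = {e}" "\<not> is_loop inc e" unfolding is_leaf_def by blast
  have "{f \<in> edges P. x \<in> inc f} = {f \<in> edges Q. x \<in> inc f}" using PU noC by auto
  then show "is_leaf inc P x" unfolding is_leaf_def using e xQ PU by auto
qed

lemma cycle_all_good: "is_cycle inc H \<Longrightarrow> v \<in> verts H \<Longrightarrow> goodv inc H v"
  unfolding is_cycle_def by (intro deg_ge2_good) auto

lemma good_not_leaf: "goodv inc H v \<Longrightarrow> \<not> is_leaf inc H v"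
  unfolding goodv_def is_leaf_def by blast

lemma adj_sym: "(u,v) \<in> adj inc H \<Longrightarrow> (v,u) \<in> adj inc H"
  unfolding adj_def by (auto simp: insert_commute)

lemma reach_sym: "reach inc H u v \<Longrightarrow> reach inc H v u"
  unfolding reach_def
proof (induction rule: rtrancl_induct)
  case base then show ?case by simp
next
  case (step y z)
  then show ?case by (meson adj_sym converse_rtrancl_into_rtrancl)
qed

lemma reach_trans: "reach inc H u v \<Longrightarrow> reach inc H v w \<Longrightarrow> reach inc H u w"
  unfolding reach_def by auto

lemma reach_mono: "reach inc H u v \<Longrightarrow> edges H \<subseteq> edges H' \<Longrightarrow> reach inc H' u v"
proof -
  assume r: "reach inc H u v" and s: "edges H \<subseteq> edges H'"
  have "adj inc H \<subseteq> adj inc H'" using s unfolding adj_def by auto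
  then show ?thesis using r unfolding reach_def by (meson rtrancl_mono subsetD)
qed

lemma reach_edge: "e \<in> edges H \<Longrightarrow> inc e = {u, v} \<Longrightarrow> reach inc H u v"
  unfolding reach_def adj_def by auto

lemma chain_reach: assumes "chain inc vs es" "set es \<subseteq> edges H"
  shows "i < length vs \<Longrightarrow> reach inc H (vs ! 0) (vs ! i)"
proof (induction i)
  case 0 then show ?case unfolding reach_def by simp
next
  case (Suc i)
  then have "i < length es" using assms unfolding chain_def by auto
  then have "es ! i \<in> edges H" "inc (es ! i) = {vs ! i, vs ! Suc i}" using assms unfolding chain_def by auto
  then have "reach inc H (vs ! i) (vs ! Suc i)" by (rule reach_edge)
  then show ?case using Suc reach_trans by fastforce
qed

lemma chain_connected: assumes "chain inc vs es" "set es \<subseteq> edges H" "verts H = set vs"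
  shows "connected inc H"
  unfolding connected_def
proof (intro conjI ballI)
  have l: "length vs > 0" using assms unfolding chain_def by auto
  then show "verts H \<noteq> {}" using assms by auto
  fix u v assume "u \<in> verts H" "v \<in> verts H"
  then obtain i j where "i < length vs" "j < length vs" "u = vs ! i" "v = vs ! j"
    using assms by (auto simp: in_set_conv_nth)
  then show "reach inc H u v" using chain_reach[OF assms(1,2)] reach_sym reach_trans by metis
qed

lemma connected_union: assumes "connected inc A" "connected inc B" "c \<in> verts A" "c \<in> verts B"
  shows "connected inc (graph_union A B)"
  unfolding connected_def
proof (intro conjI ballI)
  show "verts (graph_union A B) \<noteq> {}" using assms by auto
  have r: "reach inc (graph_union A B) u c" if "u \<in> verts (graph_union A B)" for u
  proof -
    { assume "u \<in> verts A"
      then have "reach inc A u c" using assms unfolding connected_def by auto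
      then have ?thesis by (rule reach_mono) auto }
    moreover
    { assume "u \<in> verts B"
      then have "reach inc B u c" using assms unfolding connected_def by auto
      then have ?thesis by (rule reach_mono) auto }
    ultimately show ?thesis using that by auto
  qed
  fix u v assume "u \<in> verts (graph_union A B)" "v \<in> verts (graph_union A B)"
  then show "reach inc (graph_union A B) u v" using r reach_sym reach_trans by metis
qed

lemma component_self: assumes "connected inc H" "is_graph inc H" "component inc H K" shows "K = H"
proof -
  obtain v where v: "v \<in> verts H" "verts K = {u\<in>verts H. reach inc H v u}"
     "edges K = {e\<in>edges H. inc e \<subseteq> verts K}" using assms(3) unfolding component_def by blast
  have "verts K = verts H" using v assms(1) unfolding connected_def by auto
  moreover then have "edges K = edges H" using v assms(2) unfolding is_graph_def by auto
  ultimately show ?thesis by (rule graph_eqI)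
qed

lemma graph_union_graph: "is_graph inc A \<Longrightarrow> is_graph inc B \<Longrightarrow> is_graph inc (graph_union A B)"
  unfolding is_graph_def by auto



lemma closed_cycle: assumes dv: "distinct vs" and de: "distinct es" and lv: "length vs = n"
  and le: "length es = n" and n1: "n \<ge> 1"
  and cs: "\<forall>i. Suc i < n \<longrightarrow> inc (es ! i) = {vs ! i, vs ! Suc i}"
  and cl: "inc (es ! (n - 1)) = {vs ! (n - 1), vs ! 0}"
  shows "is_cycle inc (set vs, set es)"
proof -
  define nx where "nx i = (if Suc i < n then Suc i else 0)" for i
  have ie: "\<And>i. i < n \<Longrightarrow> inc (es ! i) = {vs ! i, vs ! nx i}"
  proof -
    fix i assume i: "i < n"
    show "inc (es ! i) = {vs ! i, vs ! nx i}"
    proof (cases "Suc i < n")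
      case True then show ?thesis using cs nx_def by simp
    next
      case False then have "i = n - 1" using i by simp
      then show ?thesis using cl False nx_def by simp
    qed
  qed
  have nxl: "\<And>i. nx i < n" using n1 nx_def by auto
  have dd: "\<And>i j. i < n \<Longrightarrow> j < n \<Longrightarrow> vs ! i = vs ! j \<longleftrightarrow> i = j"
    using dv lv nth_eq_iff_index_eq by blast
  have dde: "\<And>i j. i < n \<Longrightarrow> j < n \<Longrightarrow> es ! i = es ! j \<longleftrightarrow> i = j"
    using de le nth_eq_iff_index_eq by blast
  have g: "is_graph inc (set vs, set es)"
    unfolding is_graph_def
  proof (intro conjI ballI)
    fix e assume "e \<in> edges (set vs, set es)"
    then obtain i where i: "i < n" "e = es ! i" using le by (auto simp: in_set_conv_nth)
    then have "inc e = {vs ! i, vs ! nx i}" using ie by simp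
    then show "inc e \<subseteq> verts (set vs, set es)" "card (inc e) = 1 \<or> card (inc e) = 2"
      using i nxl[of i] lv by (auto simp: card_insert_if)
  qed auto
  have ch: "chain inc vs (take (n - 1) es)" unfolding chain_def using lv le n1 cs by auto
  have conn: "connected inc (set vs, set es)"
    by (rule chain_connected[OF ch]) (auto dest: in_set_takeD)
  have deg: "degree inc (set vs, set es) v = 2" if v: "v \<in> set vs" for v
  proof (cases "n = 1")
    case True
    obtain e0 where e0: "es = [e0]" using le True by (metis One_nat_def length_0_conv length_Suc_conv)
    obtain w where w: "vs = [w]" using lv True by (metis One_nat_def length_0_conv length_Suc_conv)
    have iw: "inc e0 = {w}" using cl True e0 w by simp
    have vw: "v = w" using v w by simp
    have A: "{e\<in>set es. v \<in> inc e \<and> \<not> is_loop inc e} = {}" using iw vw e0 unfolding is_loop_def by auto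
    have B: "{e\<in>set es. inc e = {v}} = {e0}" using iw vw e0 by auto
    show ?thesis unfolding degree_def edges_pair A B by simp
  next
    case False
    then have n2: "n \<ge> 2" using n1 by simp
    obtain j where j: "j < n" "v = vs ! j" using v lv by (auto simp: in_set_conv_nth)
    define p where "p = (if j = 0 then n - 1 else j - 1)"
    have pl: "p < n" "p \<noteq> j" using j n2 p_def by auto
    have nl: "\<And>i. i < n \<Longrightarrow> \<not> is_loop inc (es ! i)"
    proof -
      fix i assume i: "i < n"
      have "nx i \<noteq> i" using n2 i nx_def by auto
      then have "vs ! i \<noteq> vs ! nx i" using dd[of i "nx i"] i nxl by auto
      then show "\<not> is_loop inc (es ! i)" unfolding is_loop_def using ie[OF i] by simp
    qed
    have B: "{e\<in>set es. inc e = {v}} = {}"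
    proof -
      { fix e assume "e \<in> set es" "inc e = {v}"
        then obtain i where "i < n" "e = es ! i" using le by (auto simp: in_set_conv_nth)
        with nl[of i] \<open>inc e = {v}\<close> have False unfolding is_loop_def by simp }
      then show ?thesis by auto
    qed
    have A: "{e\<in>set es. v \<in> inc e \<and> \<not> is_loop inc e} = {es ! j, es ! p}"
    proof (intro equalityI subsetI)
      fix e assume "e \<in> {e\<in>set es. v \<in> inc e \<and> \<not> is_loop inc e}"
      then obtain i where i: "i < n" "e = es ! i" "v \<in> inc e" using le by (auto simp: in_set_conv_nth)
      then have "vs ! j = vs ! i \<or> vs ! j = vs ! nx i" using ie j by auto
      then have "j = i \<or> j = nx i" using dd i j nxl by blast
      then have "i = j \<or> i = p" using i j p_def nx_def n2 by (auto split: if_splits)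
      then show "e \<in> {es ! j, es ! p}" using i by auto
    next
      fix e assume "e \<in> {es ! j, es ! p}"
      moreover have "nx p = j" using j p_def nx_def n2 by auto
      ultimately show "e \<in> {e\<in>set es. v \<in> inc e \<and> \<not> is_loop inc e}"
        using ie[of j] ie[of p] j pl nl le by auto
    qed
    have "es ! j \<noteq> es ! p" using dde j pl by blast
    then show ?thesis unfolding degree_def edges_pair A B by simp
  qed
  show ?thesis unfolding is_cycle_def using g conn deg by auto
qed



definition ear :: "('e \<Rightarrow> 'v set) \<Rightarrow> ('v,'e) graph \<Rightarrow> ('v,'e) graph \<Rightarrow> ('v,'e) graph \<Rightarrow> bool" where
 "ear inc G H P \<longleftrightarrow> subgraph inc P G \<and> edges P \<inter> edges H = {} \<and> edges P \<noteq> {} \<and> connected inc P \<and>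
   ((\<exists>a b. is_path inc P a b \<and> verts H \<inter> verts P = {a,b} \<and> (\<forall>v\<in>verts P - {a,b}. goodv inc P v)) \<or>
    (is_cycle inc P \<and> card (verts H \<inter> verts P) = 1) \<or>
    (\<exists>x. is_lollipop inc P x \<and> verts H \<inter> verts P = {x} \<and> (\<forall>v\<in>verts P - {x}. goodv inc P v)))"

lemma earI_path: "subgraph inc P G \<Longrightarrow> edges P \<inter> edges H = {} \<Longrightarrow> edges P \<noteq> {} \<Longrightarrow> connected inc P \<Longrightarrow>
  is_path inc P a b \<Longrightarrow> verts H \<inter> verts P = {a,b} \<Longrightarrow> (\<forall>v\<in>verts P - {a,b}. goodv inc P v) \<Longrightarrow> ear inc G H P"
  unfolding ear_def by blast
lemma earI_cycle: "subgraph inc P G \<Longrightarrow> edges P \<inter> edges H = {} \<Longrightarrow> edges P \<noteq> {} \<Longrightarrow> connected inc P \<Longrightarrow>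
  is_cycle inc P \<Longrightarrow> card (verts H \<inter> verts P) = 1 \<Longrightarrow> ear inc G H P"
  unfolding ear_def by blast
lemma earI_lollipop: "subgraph inc P G \<Longrightarrow> edges P \<inter> edges H = {} \<Longrightarrow> edges P \<noteq> {} \<Longrightarrow> connected inc P \<Longrightarrow>
  is_lollipop inc P x \<Longrightarrow> verts H \<inter> verts P = {x} \<Longrightarrow> (\<forall>v\<in>verts P - {x}. goodv inc P v) \<Longrightarrow> ear inc G H P"
  unfolding ear_def by blast

definition step_ok :: "('e \<Rightarrow> 'v set) \<Rightarrow> ('v,'e) graph \<Rightarrow> ('v,'e) graph \<Rightarrow> ('v,'e) graph \<Rightarrow> ('v,'e) graph \<Rightarrow> bool" where
 "step_ok inc G H P H' \<longleftrightarrow>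
        subgraph inc P G \<and>
        H' = graph_union H P \<and>
        edges P \<inter> edges H = {} \<and>
        (is_path_graph inc P \<or> is_cycle inc P \<or>
           is_lollipop_graph inc P) \<and>
        (\<forall>x y. is_path inc P x y \<longrightarrow>
            verts H \<inter> verts P = {x, y}) \<and>
        (\<forall>x. is_lollipop inc P x \<longrightarrow>
            verts H \<inter> verts P = {x}) \<and>
        (is_cycle inc P \<longrightarrow>
            card (verts H \<inter> verts P) = 1) \<and>
        proper_subgraph inc H H' \<and>
        excess H' - excess H = 1"

lemma ear_step:
  assumes sH: "subgraph inc H G" and cH: "connected inc H" and tH: "cactus inc H \<or> is_cycle inc H"
    and ear: "ear inc G H P"
  shows "step_ok inc G H P (graph_union H P) \<and> cactus inc (graph_union H P) \<and>
         subgraph inc (graph_union H P) G \<and> connected inc (graph_union H P)"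
proof -
  let ?U = "graph_union H P" and ?I = "verts H \<inter> verts P"
  have sP: "subgraph inc P G" and dj: "edges P \<inter> edges H = {}" and ne: "edges P \<noteq> {}"
    and cP: "connected inc P" using ear unfolding ear_def by auto
  have gH: "is_graph inc H" and gG: "is_graph inc G" and gP: "is_graph inc P"
    using sH sP unfolding subgraph_def by auto
  have fin: "finite (verts H)" "finite (edges H)" "finite (verts P)" "finite (edges P)"
    using gH gP unfolding is_graph_def by auto
  have gU: "is_graph inc ?U" by (rule graph_union_graph[OF gH gP])
  have goodH: "\<And>v. v \<in> verts H \<Longrightarrow> goodv inc H v"
  proof -
    fix v assume v: "v \<in> verts H"
    show "goodv inc H v"
    proof (cases "is_cycle inc H")
      case True show ?thesis by (rule cycle_all_good[OF True v])
    next
      case False then have "cactus inc H" using tH by blast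
      then show ?thesis using v good_iff[OF v] unfolding cactus_def cacti_graph_def by blast
    qed
  qed
  have key: "card (edges P) + card ?I = card (verts P) + 1 \<and> ?I \<noteq> {} \<and>
     (\<forall>v\<in>verts P - verts H. goodv inc P v) \<and>
     (is_path_graph inc P \<or> is_cycle inc P \<or> is_lollipop_graph inc P) \<and>
     (\<forall>x y. is_path inc P x y \<longrightarrow> ?I = {x, y}) \<and>
     (\<forall>x. is_lollipop inc P x \<longrightarrow> ?I = {x}) \<and>
     (is_cycle inc P \<longrightarrow> card ?I = 1)"
  proof -
    consider (p) a b where "is_path inc P a b" "?I = {a,b}" "\<forall>v\<in>verts P - {a,b}. goodv inc P v"
      | (c) "is_cycle inc P" "card ?I = 1"
      | (l) x where "is_lollipop inc P x" "?I = {x}" "\<forall>v\<in>verts P - {x}. goodv inc P v"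
      using ear unfolding ear_def by blast
    then show ?thesis
    proof cases
      case p
      have ab: "a \<noteq> b" using path_facts(2)[OF p(1)] .
      have c1: "card (edges P) + 1 = card (verts P)" using path_facts(1)[OF p(1)] .
      have nc: "\<not> is_cycle inc P"
      proof
        assume "is_cycle inc P" then have "card (edges P) = card (verts P)" by (rule cycle_card)
        then show False using c1 by simp
      qed
      have nl: "\<not> is_lollipop inc P x" for x
      proof
        assume "is_lollipop inc P x" then have "card (edges P) = card (verts P)" by (rule lollipop_facts(1))
        then show False using c1 by simp
      qed
      have pp: "?I = {x, y}" if xy: "is_path inc P x y" for x y
      proof -
        have "x \<in> {a,b}"
        proof (rule ccontr)
          assume "x \<notin> {a,b}"
          then have "goodv inc P x" using path_facts(3)[OF xy] p(3) by blast
          then show False using path_facts(5)[OF xy] good_not_leaf by metis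
        qed
        moreover have "y \<in> {a,b}"
        proof (rule ccontr)
          assume "y \<notin> {a,b}"
          then have "goodv inc P y" using path_facts(4)[OF xy] p(3) by blast
          then show False using path_facts(6)[OF xy] good_not_leaf by metis
        qed
        moreover have "x \<noteq> y" using path_facts(2)[OF xy] .
        ultimately have "{x,y} = {a,b}" by auto
        then show ?thesis using p(2) by simp
      qed
      have "is_path_graph inc P" unfolding is_path_graph_def using p(1) by blast
      moreover have "card ?I = 2" using p(2) ab by simp
      moreover have "?I \<noteq> {}" using p(2) by simp
      moreover have "\<forall>v\<in>verts P - verts H. goodv inc P v" using p(2,3) by blast
      ultimately show ?thesis using c1 nc nl pp by simp
    next
      case c
      have c1: "card (edges P) = card (verts P)" using cycle_card[OF c(1)] .
      have np: "\<not> is_path inc P x y" for x y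
      proof
        assume "is_path inc P x y" then have "card (edges P) + 1 = card (verts P)" by (rule path_facts(1))
        then show False using c1 by simp
      qed
      have nl: "\<not> is_lollipop inc P x" for x
      proof
        assume "is_lollipop inc P x"
        then have lf: "is_leaf inc P x" by (rule lollipop_facts(2))
        then have "x \<in> verts P" unfolding is_leaf_def by blast
        then have "goodv inc P x" by (rule cycle_all_good[OF c(1)])
        then show False using lf good_not_leaf by metis
      qed
      have "?I \<noteq> {}" using c(2) by auto
      moreover have "\<forall>v\<in>verts P - verts H. goodv inc P v" using cycle_all_good[OF c(1)] by blast
      ultimately show ?thesis using c c1 np nl by simp
    next
      case l
      have c1: "card (edges P) = card (verts P)" using lollipop_facts(1)[OF l(1)] .
      have np: "\<not> is_path inc P x y" for x y
      proof
        assume "is_path inc P x y" then have "card (edges P) + 1 = card (verts P)" by (rule path_facts(1))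
        then show False using c1 by simp
      qed
      have ll: "?I = {y}" if "is_lollipop inc P y" for y
      proof -
        have lf: "is_leaf inc P y" by (rule lollipop_facts(2)[OF that])
        then have "y \<in> verts P" unfolding is_leaf_def by blast
        have "y = x"
        proof (rule ccontr)
          assume "y \<noteq> x" then have "goodv inc P y" using l(3) \<open>y \<in> verts P\<close> by blast
          then show False using lf good_not_leaf by metis
        qed
        then show ?thesis using l(2) by simp
      qed
      have "is_lollipop_graph inc P" unfolding is_lollipop_graph_def using l(1) by blast
      moreover have "?I \<noteq> {}" using l(2) by simp
      moreover have "\<forall>v\<in>verts P - verts H. goodv inc P v" using l(2,3) by blast
      ultimately show ?thesis using l(2) c1 np ll by simp
    qed
  qed
  have cardU: "card (verts ?U) + card ?I = card (verts H) + card (verts P)"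
    using card_Un_Int[OF fin(1) fin(3)] by simp
  have cardE: "card (edges ?U) = card (edges H) + card (edges P)"
    using card_Un_disjoint[OF fin(2) fin(4)] dj by (simp add: Int_commute)
  have exc: "excess ?U - excess H = 1" unfolding excess_def using cardU cardE key by simp
  have exH: "excess H \<ge> 0"
  proof (cases "is_cycle inc H")
    case True
    have "card (edges H) = card (verts H)" by (rule cycle_card[OF True])
    then show ?thesis unfolding excess_def by simp
  next
    case False
    have "card (verts H) \<le> card (edges H)" using good_card[OF gH] goodH by blast
    then show ?thesis unfolding excess_def by simp
  qed
  have sU: "subgraph inc ?U G" using sH sP gU unfolding subgraph_def by auto
  have psub: "proper_subgraph inc H ?U"
    unfolding proper_subgraph_def subgraph_def
  proof (intro conjI)
    show "H \<noteq> ?U"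
    proof
      assume "H = ?U"
      then have "edges P \<subseteq> edges H" by (metis Un_upper2 edges_union)
      then show False using ne dj by blast
    qed
  qed (use gH gU in auto)
  obtain c where c: "c \<in> ?I" using key by blast
  have connU: "connected inc ?U" using connected_union[OF cH cP] c by blast
  have goodU: "\<And>v. v \<in> verts ?U \<Longrightarrow> goodv inc ?U v"
  proof -
    fix v assume v: "v \<in> verts ?U"
    show "goodv inc ?U v"
    proof (cases "v \<in> verts H")
      case True then have "goodv inc H v" using goodH by blast
      then show ?thesis by (rule good_mono) simp
    next
      case False then have "goodv inc P v" using v key by auto
      then show ?thesis by (rule good_mono) simp
    qed
  qed
  have cacU: "cactus inc ?U"
    unfolding cactus_def cacti_graph_def
  proof (intro conjI allI impI ballI)
    show "\<not> isolated inc ?U v" "\<not> is_leaf inc ?U v" if "v \<in> verts ?U" for v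
      using goodU[OF that] good_iff[OF that] by auto
    fix K assume "component inc ?U K"
    then have "K = ?U" using component_self connU gU by blast
    show "\<not> is_cycle inc K"
    proof
      assume "is_cycle inc K"
      then have "card (edges ?U) = card (verts ?U)" using \<open>K = ?U\<close> cycle_card by blast
      then show False using exc exH unfolding excess_def by simp
    qed
  qed (use connU gU in auto)
  have "step_ok inc G H P ?U" unfolding step_ok_def using sP dj key psub exc by simp
  then show ?thesis using sU cacU connU by simp
qed



lemma inc_two: assumes "w \<in> A" "card A = 1 \<or> card A = 2" shows "\<exists>t. A = {w, t}"
proof (cases "card A = 1")
  case True then obtain a where "A = {a}" by (meson card_1_singletonE)
  then show ?thesis using assms by auto
next
  case False then have "card A = 2" using assms by auto
  then obtain a b where "A = {a,b}" "a \<noteq> b" by (meson card_2_iff)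
  then show ?thesis using assms by auto
qed

lemma inner_good: assumes c: "chain inc vs es" and de: "distinct es" and ne: "es \<noteq> []"
  and f: "f \<notin> set es" "vs ! 0 \<in> inc f" and sub: "set (f # es) \<subseteq> edges P" and i: "i < length es"
  shows "goodv inc P (vs ! i)"
proof (cases i)
  case 0
  have "inc (es ! 0) = {vs ! 0, vs ! 1}" using c ne unfolding chain_def by auto
  moreover have "es ! 0 \<in> set es" using ne by simp
  moreover have "f \<noteq> es ! 0" using f ne by auto
  moreover have "es ! 0 \<in> edges P" "f \<in> edges P" using sub ne by auto
  ultimately show ?thesis using 0 f good_two[of f P "es ! 0" "vs ! 0" inc] by simp
next
  case (Suc i')
  have "inc (es ! i') = {vs ! i', vs ! i}" "inc (es ! i) = {vs ! i, vs ! Suc i}"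
    using c i Suc unfolding chain_def by auto
  moreover have "i' < length es" "i' \<noteq> i" using i Suc by auto
  then have "es ! i' \<noteq> es ! i" using de i nth_eq_iff_index_eq by metis
  moreover have "es ! i' \<in> edges P" "es ! i \<in> edges P" using sub i Suc by auto
  ultimately show ?thesis using good_two[of "es ! i'" P "es ! i" "vs ! i" inc] by simp
qed

lemma cactus_good: "cactus inc G \<Longrightarrow> v \<in> verts G \<Longrightarrow> goodv inc G v"
  unfolding cactus_def cacti_graph_def by (subst good_iff) auto



lemma walk:
  assumes gG: "is_graph inc G" and cG: "cactus inc G" and sH: "subgraph inc H G"
  shows "distinct vs \<Longrightarrow> distinct es \<Longrightarrow> es \<noteq> [] \<Longrightarrow> chain inc vs es \<Longrightarrow> set es \<subseteq> edges G \<Longrightarrow>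
    set es \<inter> edges H = {} \<Longrightarrow> set vs \<subseteq> verts G \<Longrightarrow> last vs \<in> verts H \<Longrightarrow>
    (\<forall>v\<in>set (butlast vs). v \<notin> verts H) \<Longrightarrow> \<exists>P. ear inc G H P"
proof (induction "card (verts G) - length vs" arbitrary: vs es rule: less_induct)
  case less
  note dv = less.prems(1) and de = less.prems(2) and ne = less.prems(3) and ch = less.prems(4)
    and esG = less.prems(5) and esH = less.prems(6) and vsG = less.prems(7) and lH = less.prems(8)
    and bl = less.prems(9)
  have gH: "is_graph inc H" using sH unfolding subgraph_def by auto
  define k where "k = length es"
  have lv: "length vs = Suc k" using ch k_def unfolding chain_def by auto
  have k0: "k > 0" using ne k_def by auto
  have ce: "\<And>i. i < k \<Longrightarrow> inc (es ! i) = {vs ! i, vs ! Suc i}" using ch k_def unfolding chain_def by auto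
  have dd: "\<And>i j. i < length vs \<Longrightarrow> j < length vs \<Longrightarrow> vs ! i = vs ! j \<longleftrightarrow> i = j"
    using dv nth_eq_iff_index_eq by blast
  have vsne: "vs \<noteq> []" using lv by auto
  have uk: "last vs = vs ! k" using lv by (metis diff_Suc_1 last_conv_nth list.size(3) nat.distinct(1))
  define w where "w = vs ! 0"
  define u where "u = last vs"
  have notH: "\<And>i. i < k \<Longrightarrow> vs ! i \<notin> verts H"
  proof -
    fix i assume i: "i < k"
    have "butlast vs ! i = vs ! i" using i lv by (simp add: nth_butlast)
    moreover have "i < length (butlast vs)" using i lv by simp
    ultimately have "vs ! i \<in> set (butlast vs)" by (metis nth_mem)
    then show "vs ! i \<notin> verts H" using bl by blast
  qed
  have wH: "w \<notin> verts H" using notH k0 w_def by simp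
  have wG: "w \<in> verts G" using vsG w_def lv by auto
  have e0: "es ! 0 \<in> edges G" "inc (es ! 0) = {w, vs ! 1}" using esG ne ce[OF k0] w_def by auto
  have w1: "w \<noteq> vs ! 1" using dd[of 0 1] lv k0 w_def by auto
  have gw: "goodv inc G w" by (rule cactus_good[OF cG wG])
  have nl0: "\<not> is_loop inc (es ! 0)" unfolding is_loop_def using e0 w1 by simp
  have ng: "{f\<in>edges G. w \<in> inc f} \<noteq> {es ! 0}"
  proof -
    have "(\<exists>e\<in>edges G. w \<in> inc e) \<and> \<not>(\<exists>e. {f\<in>edges G. w \<in> inc f} = {e} \<and> \<not> is_loop inc e)"
      using gw unfolding goodv_def .
    then show ?thesis using nl0 by meson
  qed
  have "es ! 0 \<in> {f\<in>edges G. w \<in> inc f}" using e0 by simp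
  then have "\<exists>f. f \<in> {f\<in>edges G. w \<in> inc f} \<and> f \<noteq> es ! 0" using ng by blast
  then obtain f where f: "f \<in> edges G" "w \<in> inc f" "f \<noteq> es ! 0" by blast
  have fH: "f \<notin> edges H" using gH wH f unfolding is_graph_def by blast
  have fes: "f \<notin> set es"
  proof
    assume "f \<in> set es"
    then obtain i where i: "i < k" "f = es ! i" using k_def by (auto simp: in_set_conv_nth)
    have "i \<noteq> 0" proof assume "i = 0" then show False using i f(3) by simp qed
    then have "vs ! 0 \<noteq> vs ! i" "vs ! 0 \<noteq> vs ! Suc i" using dd[of 0 i] dd[of 0 "Suc i"] i lv by auto
    then show False using ce[OF i(1)] i f w_def by auto
  qed
  obtain t where t: "inc f = {w, t}" using inc_two[OF f(2)] gG f(1) unfolding is_graph_def by blast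
  have tG: "t \<in> verts G" using gG f(1) t unfolding is_graph_def by auto
  have igood: "\<And>i P. i < k \<Longrightarrow> set (f # es) \<subseteq> edges P \<Longrightarrow> goodv inc P (vs ! i)"
    using inner_good[OF ch de ne fes] f(2) w_def k_def by auto
  have IHV: "verts H \<inter> set vs = {u}"
  proof
    show "{u} \<subseteq> verts H \<inter> set vs" using lH u_def vsne by auto
    show "verts H \<inter> set vs \<subseteq> {u}"
    proof
      fix v assume v: "v \<in> verts H \<inter> set vs"
      then obtain i where i: "i < Suc k" "v = vs ! i" using lv by (auto simp: in_set_conv_nth)
      then have "\<not> i < k" using notH v by blast
      then have "i = k" using i by simp
      then show "v \<in> {u}" using i uk u_def by simp
    qed
  qed
  show ?case
  proof (cases "t \<in> set vs")
    case True
    then obtain j where j: "j < Suc k" "t = vs ! j" using lv by (auto simp: in_set_conv_nth)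
    show ?thesis
    proof (cases "j = k")
      case True
      let ?P = "(set vs, set (es @ [f]))"
      have cyc: "is_cycle inc ?P"
      proof (rule closed_cycle[OF dv _ lv])
        show "distinct (es @ [f])" using de fes by simp
        show "length (es @ [f]) = Suc k" using k_def by simp
        show "\<forall>i. Suc i < Suc k \<longrightarrow> inc ((es @ [f]) ! i) = {vs ! i, vs ! Suc i}"
          using ce k_def by (auto simp: nth_append)
        show "inc ((es @ [f]) ! (Suc k - 1)) = {vs ! (Suc k - 1), vs ! 0}"
          using t j True w_def k_def by (auto simp: nth_append insert_commute)
      qed simp
      have "ear inc G H ?P"
      proof (rule earI_cycle)
        show "subgraph inc ?P G" unfolding subgraph_def using cyc gG vsG esG f(1)
          unfolding is_cycle_def by auto
        show "edges ?P \<inter> edges H = {}" using esH fH by auto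
        show "edges ?P \<noteq> {}" by simp
        show "connected inc ?P" using cyc unfolding is_cycle_def by auto
        show "is_cycle inc ?P" by (rule cyc)
        show "card (verts H \<inter> verts ?P) = 1" using IHV by simp
      qed
      then show ?thesis by blast
    next
      case False
      then have jk: "j < k" using j by simp
      let ?P = "(set vs, set (f # es))"
      let ?C = "(set (take (Suc j) vs), set (take j es @ [f]))"
      let ?Q = "(set (drop j vs), set (drop j es))"
      have jl: "j < length vs" "j < length es" using jk lv k_def by auto
      have cyc: "is_cycle inc ?C"
      proof (rule closed_cycle[where n="Suc j"])
        show "distinct (take (Suc j) vs)" using dv by simp
        show "distinct (take j es @ [f])" using de fes by (auto dest: in_set_takeD)
        show "length (take (Suc j) vs) = Suc j" using jl by simp
        show "length (take j es @ [f]) = Suc j" using jl by simp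
        show "\<forall>i. Suc i < Suc j \<longrightarrow> inc ((take j es @ [f]) ! i) = {take (Suc j) vs ! i, take (Suc j) vs ! Suc i}"
          using ce jk jl by (auto simp: nth_append)
        show "inc ((take j es @ [f]) ! (Suc j - 1)) = {take (Suc j) vs ! (Suc j - 1), take (Suc j) vs ! 0}"
          using t j jl w_def by (auto simp: nth_append insert_commute)
      qed simp
      have chQ: "chain inc (drop j vs) (drop j es)"
        unfolding chain_def using lv k_def ce jl by (auto simp: add.commute Suc_diff_le less_imp_le_nat)
      have pQ: "is_path inc ?Q (hd (drop j vs)) (last (drop j vs))"
        by (rule chain_path[OF chQ]) (use dv de jl in auto)
      have hQ: "hd (drop j vs) = t" using j jl by (simp add: hd_drop_conv_nth)
      have lQ: "last (drop j vs) = u" using jl u_def by simp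
      have dec: "vs = take j vs @ vs ! j # drop (Suc j) vs" using jl by (simp add: id_take_nth_drop)
      have VI: "set (take (Suc j) vs) \<inter> set (drop j vs) = {t}"
      proof -
        have "distinct (take j vs @ vs ! j # drop (Suc j) vs)" using dv dec by simp
        then have "set (take j vs) \<inter> set (drop (Suc j) vs) = {}" "vs ! j \<notin> set (take j vs)"
          "vs ! j \<notin> set (drop (Suc j) vs)" by auto
        moreover have "take (Suc j) vs = take j vs @ [vs ! j]" using jl by (simp add: take_Suc_conv_app_nth)
        moreover have "drop j vs = vs ! j # drop (Suc j) vs" using jl by (simp add: Cons_nth_drop_Suc)
        ultimately show ?thesis using j by auto
      qed
      have EI: "set (take j es @ [f]) \<inter> set (drop j es) = {}"
        using fes de by (auto dest: in_set_dropD simp: set_take_disj_set_drop_if_distinct)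
      have PU: "?P = graph_union ?C ?Q"
      proof (rule graph_eqI)
        have "set vs = set (take (Suc j) vs) \<union> set (drop j vs)"
        proof -
          have a: "set vs = set (take j vs) \<union> set (drop j vs)" by (metis append_take_drop_id set_append)
          have b: "set (take j vs) \<subseteq> set (take (Suc j) vs)" by (rule set_take_subset_set_take) simp
          have c: "set (take (Suc j) vs) \<subseteq> set vs" by (rule set_take_subset)
          show ?thesis using a b c by blast
        qed
        then show "verts ?P = verts (graph_union ?C ?Q)" by simp
        have "set es = set (take j es) \<union> set (drop j es)" by (metis append_take_drop_id set_append)
        then show "edges ?P = edges (graph_union ?C ?Q)" by auto
      qed
      have pQ': "is_path inc ?Q t u" using pQ hQ lQ by simp
      have VI': "verts ?C \<inter> verts ?Q = {t}" using VI by simp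
      have EI': "edges ?C \<inter> edges ?Q = {}" using EI by simp
      have lol: "is_lollipop inc ?P u"
        unfolding is_lollipop_def by (rule exI[of _ ?C], rule exI[of _ ?Q], rule exI[of _ t]) (use cyc pQ' VI' EI' PU in blast)
      have "ear inc G H ?P" unfolding ear_def
      proof (intro conjI disjI2)
        show "subgraph inc ?P G" unfolding subgraph_def
          using chain_graph[OF ch] gG vsG esG f(1) t tG w_def j(2) jl(1) nth_mem[OF jl(1)] nth_mem[of 0 vs] lv unfolding is_graph_def by auto
        show "edges ?P \<inter> edges H = {}" using esH fH by auto
        show "edges ?P \<noteq> {}" by simp
        show "connected inc ?P" by (rule chain_connected[OF ch]) auto
        show "\<exists>x. is_lollipop inc ?P x \<and> verts H \<inter> verts ?P = {x} \<and> (\<forall>v\<in>verts ?P - {x}. goodv inc ?P v)"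
        proof (intro exI conjI ballI)
          show "is_lollipop inc ?P u" by (rule lol)
          show "verts H \<inter> verts ?P = {u}" using IHV by simp
          fix v assume v: "v \<in> verts ?P - {u}"
          then obtain i where i: "i < Suc k" "v = vs ! i" using lv by (auto simp: in_set_conv_nth)
          then have "i \<noteq> k" using v uk u_def by auto
          then show "goodv inc ?P v" proof -
            have "i < k" using i \<open>i \<noteq> k\<close> by simp
            then show ?thesis using igood[where i=i and P="?P"] i by simp
          qed
        qed
      qed
      then show ?thesis by blast
    qed
  next
    case tvs: False
    show ?thesis
    proof (cases "t \<in> verts H")
      case True
      let ?P = "(set (t # vs), set (f # es))"
      have ch2: "chain inc (t # vs) (f # es)"
        unfolding chain_def using lv k_def ce t w_def by (auto simp: nth_Cons' insert_commute)
      have pP: "is_path inc ?P t u"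
        using chain_path[OF ch2] dv de tvs fes vsne u_def by simp
      have IV: "verts H \<inter> verts ?P = {t, u}" using IHV True by auto
      have "ear inc G H ?P" unfolding ear_def
      proof (intro conjI disjI1)
        show "subgraph inc ?P G" unfolding subgraph_def
          using chain_graph[OF ch2] gG vsG esG f(1) tG by auto
        show "edges ?P \<inter> edges H = {}" using esH fH by auto
        show "edges ?P \<noteq> {}" by simp
        show "connected inc ?P" by (rule chain_connected[OF ch2]) auto
        show "\<exists>a b. is_path inc ?P a b \<and> verts H \<inter> verts ?P = {a, b} \<and> (\<forall>v\<in>verts ?P - {a, b}. goodv inc ?P v)"
        proof (intro exI conjI ballI)
          show "is_path inc ?P t u" by (rule pP)
          show "verts H \<inter> verts ?P = {t, u}" by (rule IV)
          fix v assume v: "v \<in> verts ?P - {t, u}"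
          then have "v \<in> set vs" by auto
          then obtain i where i: "i < Suc k" "v = vs ! i" using lv by (auto simp: in_set_conv_nth)
          then have "i \<noteq> k" using v uk u_def by auto
          then show "goodv inc ?P v" proof -
            have "i < k" using i \<open>i \<noteq> k\<close> by simp
            then show ?thesis using igood[where i=i and P="?P"] i by simp
          qed
        qed
      qed
      then show ?thesis by blast
    next
      case False
      have ch2: "chain inc (t # vs) (f # es)"
        unfolding chain_def using lv k_def ce t w_def by (auto simp: nth_Cons' insert_commute)
      have fG: "finite (verts G)" using gG unfolding is_graph_def by auto
      have "card (set (t # vs)) \<le> card (verts G)" using vsG tG fG by (intro card_mono) auto
      then have "length (t # vs) \<le> card (verts G)" using dv tvs by (simp add: distinct_card)
      then have lt: "card (verts G) - length (t # vs) < card (verts G) - length vs" by simp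
      have "\<forall>v\<in>set (butlast (t # vs)). v \<notin> verts H" using bl False vsne by auto
      then show ?thesis
        using less.hyps[OF lt, of "f # es"] dv tvs de fes ch2 esG f(1) esH fH vsG tG lH vsne by auto
    qed
  qed
qed



lemma crossing: "(a, b) \<in> r\<^sup>* \<Longrightarrow> a \<in> S \<Longrightarrow> b \<notin> S \<Longrightarrow> \<exists>p q. (p, q) \<in> r \<and> p \<in> S \<and> q \<notin> S"
proof (induction rule: rtrancl_induct)
  case base then show ?case by simp
next
  case (step y z)
  then show ?case by (cases "y \<in> S") auto
qed

lemma find_ear:
  assumes gG: "is_graph inc G" and cG: "cactus inc G" and sH: "subgraph inc H G"
    and cH: "connected inc H" and HG: "H \<noteq> G"
  shows "\<exists>P. ear inc G H P"
proof (cases "\<exists>e\<in>edges G - edges H. inc e \<subseteq> verts H")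
  case True
  then obtain e where e: "e \<in> edges G" "e \<notin> edges H" "inc e \<subseteq> verts H" by blast
  have cd: "card (inc e) = 1 \<or> card (inc e) = 2" using gG e unfolding is_graph_def by auto
  then have "inc e \<noteq> {}" by auto
  then obtain a where a: "a \<in> inc e" by blast
  obtain b where ab: "inc e = {a, b}" using inc_two[OF a cd] by blast
  have aG: "a \<in> verts G" "b \<in> verts G" using gG e ab unfolding is_graph_def by auto
  have aH: "a \<in> verts H" "b \<in> verts H" using e ab by auto
  show ?thesis
  proof (cases "a = b")
    case True
    let ?P = "(set [a], set [e])"
    have cyc: "is_cycle inc ?P" by (rule closed_cycle[where n=1]) (use ab True in auto)
    have "ear inc G H ?P"
    proof (rule earI_cycle)
      show "subgraph inc ?P G" unfolding subgraph_def using cyc gG aG e unfolding is_cycle_def by auto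
      show "edges ?P \<inter> edges H = {}" using e by auto
      show "edges ?P \<noteq> {}" by simp
      show "connected inc ?P" using cyc unfolding is_cycle_def by auto
      show "is_cycle inc ?P" by (rule cyc)
      show "card (verts H \<inter> verts ?P) = 1" using aH by simp
    qed
    then show ?thesis by blast
  next
    case False
    let ?P = "(set [a, b], set [e])"
    have ch: "chain inc [a, b] [e]" unfolding chain_def using ab by simp
    have pP: "is_path inc ?P a b" using chain_path[OF ch] False by simp
    have "ear inc G H ?P" unfolding ear_def
    proof (intro conjI disjI1)
      show "subgraph inc ?P G" unfolding subgraph_def using chain_graph[OF ch] gG aG e by auto
      show "edges ?P \<inter> edges H = {}" using e by auto
      show "edges ?P \<noteq> {}" by simp
      show "connected inc ?P" by (rule chain_connected[OF ch]) auto
      show "\<exists>a b. is_path inc ?P a b \<and> verts H \<inter> verts ?P = {a, b} \<and> (\<forall>v\<in>verts ?P - {a, b}. goodv inc ?P v)"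
        using pP aH by (intro exI[of _ a] exI[of _ b]) auto
    qed
    then show ?thesis by blast
  qed
next
  case False
  have gH: "is_graph inc H" using sH unfolding subgraph_def by auto
  have VV: "verts H \<noteq> verts G"
  proof
    assume VV: "verts H = verts G"
    have "edges H \<noteq> edges G" using HG VV graph_eqI by metis
    then obtain e where "e \<in> edges G" "e \<notin> edges H" using sH unfolding subgraph_def by blast
    then show False using False VV gG unfolding is_graph_def by blast
  qed
  obtain a where a: "a \<in> verts H" using cH unfolding connected_def by blast
  obtain b where b: "b \<in> verts G" "b \<notin> verts H" using VV sH unfolding subgraph_def by blast
  have aG: "a \<in> verts G" using a sH unfolding subgraph_def by auto
  have "reach inc G a b" using cG aG b unfolding cactus_def connected_def by blast
  then obtain p q where pq: "(p, q) \<in> adj inc G" "p \<in> verts H" "q \<notin> verts H"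
    using crossing[of a b _ "verts H"] a b unfolding reach_def by blast
  then obtain e where e: "e \<in> edges G" "inc e = {p, q}" unfolding adj_def by blast
  have eH: "e \<notin> edges H" using gH e pq unfolding is_graph_def by blast
  have qG: "q \<in> verts G" "p \<in> verts G" using gG e unfolding is_graph_def by auto
  have ch: "chain inc [q, p] [e]" unfolding chain_def using e by (simp add: insert_commute)
  show ?thesis
    by (rule walk[OF gG cG sH, of "[q, p]" "[e]"]) (use pq e eH qG ch in auto)
qed

lemma main_induct:
  assumes gG: "is_graph inc G" and cG: "cactus inc G"
  shows "subgraph inc H G \<Longrightarrow> connected inc H \<Longrightarrow> cactus inc H \<or> is_cycle inc H \<Longrightarrow>
    \<exists>r Ps Gs. length Ps = r \<and> length Gs = Suc r \<and> Gs ! 0 = H \<and> Gs ! r = G \<and>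
     (r = 0 \<longleftrightarrow> G = H) \<and>
     (\<forall>i\<le>r. subgraph inc (Gs ! i) G) \<and>
     (\<forall>i\<in>{1..r}. cactus inc (Gs ! i)) \<and>
     (\<forall>i\<in>{1..r}. step_ok inc G (Gs ! (i - 1)) (Ps ! (i - 1)) (Gs ! i))"
proof (induction "card (edges G - edges H)" arbitrary: H rule: less_induct)
  case less
  show ?case
  proof (cases "H = G")
    case True
    then show ?thesis using less.prems by (intro exI[of _ 0] exI[of _ "[]"] exI[of _ "[H]"]) auto
  next
    case False
    obtain P where P: "ear inc G H P" using find_ear[OF gG cG less.prems(1,2) False] by blast
    let ?H' = "graph_union H P"
    have st: "step_ok inc G H P ?H' \<and> cactus inc ?H' \<and> subgraph inc ?H' G \<and> connected inc ?H'"
      by (rule ear_step[OF less.prems P])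
    have fE: "finite (edges G)" using gG unfolding is_graph_def by auto
    have ne: "edges P \<noteq> {}" "edges P \<inter> edges H = {}" "edges P \<subseteq> edges G"
      using P unfolding ear_def subgraph_def by auto
    have "edges G - edges ?H' \<subset> edges G - edges H" using ne by auto
    then have lt: "card (edges G - edges ?H') < card (edges G - edges H)"
      using fE by (intro psubset_card_mono) auto
    obtain r Ps Gs where IH: "length Ps = r" "length Gs = Suc r" "Gs ! 0 = ?H'" "Gs ! r = G"
      "(r = 0 \<longleftrightarrow> G = ?H')" "\<forall>i\<le>r. subgraph inc (Gs ! i) G" "\<forall>i\<in>{1..r}. cactus inc (Gs ! i)"
      "\<forall>i\<in>{1..r}. step_ok inc G (Gs ! (i - 1)) (Ps ! (i - 1)) (Gs ! i)"
      using less.hyps[OF lt] st by blast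
    show ?thesis
    proof (rule exI[of _ "Suc r"], rule exI[of _ "P # Ps"], rule exI[of _ "H # Gs"], intro conjI)
      show "length (P # Ps) = Suc r" "length (H # Gs) = Suc (Suc r)" "(H # Gs) ! 0 = H"
        "(H # Gs) ! Suc r = G" using IH by auto
      show "(Suc r = 0) = (G = H)" using False by auto
      show "\<forall>i\<le>Suc r. subgraph inc ((H # Gs) ! i) G"
      proof (intro allI impI)
        fix i assume "i \<le> Suc r"
        then show "subgraph inc ((H # Gs) ! i) G" using IH(6) less.prems(1) by (cases i) auto
      qed
      show "\<forall>i\<in>{1..Suc r}. cactus inc ((H # Gs) ! i)"
      proof
        fix i assume i: "i \<in> {1..Suc r}"
        then obtain i' where i': "i = Suc i'" "i' \<le> r" by (cases i) auto
        show "cactus inc ((H # Gs) ! i)"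
        proof (cases i')
          case 0 then show ?thesis using i' IH(3) st by simp
        next
          case (Suc m) then show ?thesis using i' IH(7) by auto
        qed
      qed
      show "\<forall>i\<in>{1..Suc r}. step_ok inc G ((H # Gs) ! (i - 1)) ((P # Ps) ! (i - 1)) ((H # Gs) ! i)"
      proof
        fix i assume i: "i \<in> {1..Suc r}"
        then obtain i' where i': "i = Suc i'" "i' \<le> r" by (cases i) auto
        show "step_ok inc G ((H # Gs) ! (i - 1)) ((P # Ps) ! (i - 1)) ((H # Gs) ! i)"
        proof (cases i')
          case 0 then show ?thesis using i' IH(3) st by simp
        next
          case (Suc m)
          have "i' \<in> {1..r}" using i' Suc by simp
          then have "step_ok inc G (Gs ! (i' - 1)) (Ps ! (i' - 1)) (Gs ! i')" using IH(8) by blast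
          then show ?thesis using i' Suc by simp
        qed
      qed
    qed
  qed
qed

theorem mainTheorem3:
  fixes inc :: "'e \<Rightarrow> 'v set" and G G0 :: "('v,'e) graph"
  assumes "is_graph inc G" and "connected inc G" and "cactus inc G"
    and "subgraph inc G0 G" and "connected inc G0"
    and "cactus inc G0 \<or> is_cycle inc G0"
  shows "\<exists>r Ps Gs. length Ps = r \<and> length Gs = Suc r \<and> Gs ! 0 = G0 \<and> Gs ! r = G \<and>
     (r = 0 \<longleftrightarrow> G = G0) \<and>
     (\<forall>i\<le>r. subgraph inc (Gs ! i) G) \<and>
     (\<forall>i\<in>{1..r}. cactus inc (Gs ! i)) \<and>
     (\<forall>i\<in>{1..r}.
        subgraph inc (Ps ! (i - 1)) G \<and>
        Gs ! i = graph_union (Gs ! (i - 1)) (Ps ! (i - 1)) \<and>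
        edges (Ps ! (i - 1)) \<inter> edges (Gs ! (i - 1)) = {} \<and>
        (is_path_graph inc (Ps ! (i - 1)) \<or> is_cycle inc (Ps ! (i - 1)) \<or>
           is_lollipop_graph inc (Ps ! (i - 1))) \<and>
        (\<forall>x y. is_path inc (Ps ! (i - 1)) x y \<longrightarrow>
            verts (Gs ! (i - 1)) \<inter> verts (Ps ! (i - 1)) = {x, y}) \<and>
        (\<forall>x. is_lollipop inc (Ps ! (i - 1)) x \<longrightarrow>
            verts (Gs ! (i - 1)) \<inter> verts (Ps ! (i - 1)) = {x}) \<and>
        (is_cycle inc (Ps ! (i - 1)) \<longrightarrow>
            card (verts (Gs ! (i - 1)) \<inter> verts (Ps ! (i - 1))) = 1) \<and>
        proper_subgraph inc (Gs ! (i - 1)) (Gs ! i) \<and>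
        excess (Gs ! i) - excess (Gs ! (i - 1)) = 1)"
  using main_induct[OF assms(1,3,4,5,6)] unfolding step_ok_def by blast


end
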